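(* For every $n\ge 2$ there is a finite poset $P$ excluding $\mathbf{3}+\mathbf{3}$ such that $\dim(P)\ge n$ and every convex subposet $Q$ of $P$ satisfies $\dim(Q)\le h(Q)+1$, where $h(Q)$ denotes the height of $Q$.
   Context: $\mathbf{3}+\mathbf{3}$ is the disjoint union of two $3$-element chains with all points of one incomparable to all points of the other; $P$ excludes it if no subposet is isomorphic to it. A subposet $Q$ is convex if $x,z\in Q$ and $x<y<z$ imply $y\in Q$. $\dim$ denotes the Dushnik–Miller dimension. *)

theory Defs
  imports Main
begin

definition poset :: "'a set \<Rightarrow> 'a rel \<Rightarrow> bool" where
  "poset X R \<longleftrightarrow> R \<subseteq> X \<times> X \<and> partial_order_on X R"

definition sub_order :: "'a set \<Rightarrow> 'a rel \<Rightarrow> 'a rel" where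
  "sub_order Q R = R \<inter> (Q \<times> Q)"

definition strictly_below :: "'a rel \<Rightarrow> 'a \<Rightarrow> 'a \<Rightarrow> bool" where
  "strictly_below R x y \<longleftrightarrow> (x, y) \<in> R \<and> x \<noteq> y"

definition incomparable :: "'a rel \<Rightarrow> 'a \<Rightarrow> 'a \<Rightarrow> bool" where
  "incomparable R x y \<longleftrightarrow> (x, y) \<notin> R \<and> (y, x) \<notin> R"

definition excludes_3_3 :: "'a set \<Rightarrow> 'a rel \<Rightarrow> bool" where
  "excludes_3_3 X R \<longleftrightarrow>
     \<not> (\<exists>a1\<in>X. \<exists>a2\<in>X. \<exists>a3\<in>X. \<exists>b1\<in>X. \<exists>b2\<in>X. \<exists>b3\<in>X.
          strictly_below R a1 a2 \<and> strictly_below R a2 a3 \<and>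
          strictly_below R b1 b2 \<and> strictly_below R b2 b3 \<and>
          (\<forall>a\<in>{a1,a2,a3}. \<forall>b\<in>{b1,b2,b3}. incomparable R a b))"

definition convex_sub :: "'a set \<Rightarrow> 'a rel \<Rightarrow> 'a set \<Rightarrow> bool" where
  "convex_sub X R Q \<longleftrightarrow> Q \<subseteq> X \<and>
     (\<forall>x\<in>Q. \<forall>z\<in>Q. \<forall>y\<in>X. strictly_below R x y \<and> strictly_below R y z \<longrightarrow> y \<in> Q)"

definition linear_extension :: "'a set \<Rightarrow> 'a rel \<Rightarrow> 'a rel \<Rightarrow> bool" where
  "linear_extension X R L \<longleftrightarrow> L \<subseteq> X \<times> X \<and> linear_order_on X L \<and> R \<subseteq> L"

definition realizer :: "'a set \<Rightarrow> 'a rel \<Rightarrow> 'a rel set \<Rightarrow> bool" where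
  "realizer X R Ls \<longleftrightarrow> Ls \<noteq> {} \<and> (\<forall>L\<in>Ls. linear_extension X R L) \<and> \<Inter> Ls = R"

definition dim :: "'a set \<Rightarrow> 'a rel \<Rightarrow> nat" where
  "dim X R = (LEAST d. \<exists>Ls. finite Ls \<and> card Ls = d \<and> realizer X R Ls)"

definition is_chain :: "'a set \<Rightarrow> 'a rel \<Rightarrow> 'a set \<Rightarrow> bool" where
  "is_chain X R C \<longleftrightarrow> C \<subseteq> X \<and> (\<forall>x\<in>C. \<forall>y\<in>C. (x, y) \<in> R \<or> (y, x) \<in> R)"

definition height :: "'a set \<Rightarrow> 'a rel \<Rightarrow> nat" where
  "height X R = Max {card C | C. is_chain X R C}"

end

theory Submission
  imports Defs "HOL-Library.Product_Lexorder"
begin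

definition kd :: "nat \<Rightarrow> nat" where "kd x = x mod 3"
definition ix :: "nat \<Rightarrow> nat" where "ix x = x div 3"

lemma kd_cases: "kd x = 0 \<or> kd x = 1 \<or> kd x = 2"
  unfolding kd_def by presburger

lemma eq_iff: "x = y \<longleftrightarrow> kd x = kd y \<and> ix x = ix y"
  unfolding kd_def ix_def by (metis div_mult_mod_eq)

lemma kd_ix_simps[simp]:
  "kd (3*i) = 0" "ix (3*i) = i" "kd (3*i+1) = 1" "ix (3*i+1) = i"
  "kd (3*i+2) = 2" "ix (3*i+2) = i"
  "kd (Suc (3*i)) = 1" "ix (Suc (3*i)) = i" "kd (Suc (Suc (3*i))) = 2" "ix (Suc (Suc (3*i))) = i"
  unfolding kd_def ix_def by presburger+

lemma ix_bound: "x < 3*n \<Longrightarrow> ix x < n"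
  unfolding ix_def by auto

lemma in_X_iff: "x < 3*n \<longleftrightarrow> ix x < n"
  unfolding ix_def by auto

definition lt :: "nat \<Rightarrow> nat \<Rightarrow> bool" where
  "lt x y \<longleftrightarrow> (kd x = 0 \<and> kd y = 1 \<and> ix x \<noteq> ix y) \<or> (kd x = 0 \<and> kd y = 2 \<and> ix x \<le> ix y)
     \<or> (kd x = 2 \<and> kd y = 1 \<and> ix x < ix y) \<or> (kd x = 2 \<and> kd y = 2 \<and> ix x < ix y)"

lemma lt_trans: "lt x y \<Longrightarrow> lt y z \<Longrightarrow> lt x z"
  unfolding lt_def by auto

lemma lt_irrefl: "\<not> lt x x"
  unfolding lt_def by auto

lemma lt_asym: "lt x y \<Longrightarrow> \<not> lt y x"
  unfolding lt_def by auto

definition XX :: "nat \<Rightarrow> nat set" where "XX n = {..<3*n}"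
definition RR :: "nat \<Rightarrow> nat rel" where
  "RR n = {(x,y). x \<in> XX n \<and> y \<in> XX n \<and> (x = y \<or> lt x y)}"

lemma poset_RR: "poset (XX n) (RR n)"
  unfolding poset_def partial_order_on_def preorder_on_def refl_on_def trans_def antisym_def RR_def
  using lt_trans lt_asym by blast

lemma excl: "excludes_3_3 (XX n) (RR n)"
proof -
  have mid: "kd y = 2" if "strictly_below (RR n) x y" "strictly_below (RR n) y z" for x y z
    using that kd_cases[of y] unfolding strictly_below_def RR_def lt_def by auto
  show ?thesis unfolding excludes_3_3_def
  proof (clarify)
    fix a1 a2 a3 b1 b2 b3
    assume h: "strictly_below (RR n) a1 a2" "strictly_below (RR n) a2 a3"
      "strictly_below (RR n) b1 b2" "strictly_below (RR n) b2 b3"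
      "\<forall>a\<in>{a1, a2, a3}. \<forall>b\<in>{b1, b2, b3}. incomparable (RR n) a b"
      "a2 \<in> XX n" "b2 \<in> XX n"
    have "kd a2 = 2" "kd b2 = 2" using mid h by blast+
    moreover have "incomparable (RR n) a2 b2" using h by blast
    ultimately have "\<not> lt a2 b2" "\<not> lt b2 a2" "a2 \<noteq> b2"
      using h(6,7) unfolding incomparable_def RR_def by auto
    then have "ix a2 \<noteq> ix b2" using \<open>kd a2 = 2\<close> \<open>kd b2 = 2\<close> eq_iff[of a2 b2] by auto
    then have "ix a2 < ix b2 \<or> ix b2 < ix a2" by linarith
    then show False using \<open>\<not> lt a2 b2\<close> \<open>\<not> lt b2 a2\<close> \<open>kd a2 = 2\<close> \<open>kd b2 = 2\<close>
      unfolding lt_def by auto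
  qed
qed

definition lin_of :: "('a \<Rightarrow> 'b::linorder) \<Rightarrow> 'a set \<Rightarrow> 'a rel" where
  "lin_of f A = {(x,y). x \<in> A \<and> y \<in> A \<and> f x \<le> f y}"

lemma lin_of_linear: "inj_on f A \<Longrightarrow> linear_order_on A (lin_of f A)"
  unfolding linear_order_on_def partial_order_on_def preorder_on_def refl_on_def trans_def
    antisym_def total_on_def lin_of_def inj_on_def
  by (auto intro: order_trans antisym)

lemma lin_of_sub: "B \<subseteq> A \<Longrightarrow> lin_of f A \<inter> B \<times> B = lin_of f B"
  unfolding lin_of_def by auto

lemma lin_of_ext: "inj_on f Q \<Longrightarrow> Q \<subseteq> X \<Longrightarrow> R \<subseteq> lin_of f X \<Longrightarrow>
   linear_extension Q (sub_order Q R) (lin_of f Q)"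
  unfolding linear_extension_def sub_order_def
  using lin_of_linear[of f Q] lin_of_sub[of Q X f] by (auto simp: lin_of_def)

definition px :: "nat \<Rightarrow> nat \<Rightarrow> int" where
  "px n x = (if kd x = 0 then 2 * int (ix x) - 1 else if kd x = 2 then 2 * int (ix x)
     else 4 * int n + 10 - 2 * int (ix x))"
definition py :: "nat \<Rightarrow> nat \<Rightarrow> int" where
  "py n x = (if kd x = 0 then - 2 * int (ix x) - 1 else if kd x = 2 then 2 * int (ix x)
     else 2 * int (ix x) - 1)"

lemma pt_key: "x \<in> XX n \<Longrightarrow> y \<in> XX n \<Longrightarrow>
  (px n x \<le> px n y \<and> py n x \<le> py n y) \<longleftrightarrow>
  (x = y \<or> lt x y \<or> (kd x = 0 \<and> kd y = 1 \<and> ix x = ix y))"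
  using kd_cases[of x] kd_cases[of y] ix_bound[of x n] ix_bound[of y n]
  unfolding XX_def px_def py_def lt_def eq_iff[of x y] by auto

lemma pt_inj: "x \<in> XX n \<Longrightarrow> y \<in> XX n \<Longrightarrow> px n x = px n y \<Longrightarrow> py n x = py n y \<Longrightarrow> x = y"
proof -
  assume a: "x \<in> XX n" "y \<in> XX n" "px n x = px n y" "py n x = py n y"
  have 1: "x = y \<or> lt x y \<or> (kd x = 0 \<and> kd y = 1 \<and> ix x = ix y)" using pt_key[of x n y] a by simp
  have 2: "y = x \<or> lt y x \<or> (kd y = 0 \<and> kd x = 1 \<and> ix y = ix x)" using pt_key[of y n x] a by simp
  show "x = y"
  proof (rule ccontr)
    assume "x \<noteq> y"
    then have "lt x y \<or> (kd x = 0 \<and> kd y = 1)" "lt y x \<or> (kd y = 0 \<and> kd x = 1)" using 1 2 by auto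
    then show False using lt_asym[of x y] unfolding lt_def by auto
  qed
qed

definition rk :: "nat \<Rightarrow> nat \<Rightarrow> nat \<Rightarrow> nat" where
  "rk n i x = (if kd x = 0 then (if ix x = i then n+2 else 0)
     else if kd x = 2 then (if ix x < i then 1 + ix x else n + 3 + ix x)
     else (if ix x = i then n+1 else 3*n+3))"

lemma rk_mono: "x \<in> XX n \<Longrightarrow> y \<in> XX n \<Longrightarrow> lt x y \<Longrightarrow> rk n i x < rk n i y"
proof -
  assume a: "x \<in> XX n" "y \<in> XX n" "lt x y"
  have b: "ix x < n" "ix y < n" using a(1,2) ix_bound unfolding XX_def by auto
  from a(3) show ?thesis unfolding lt_def
  proof (elim disjE conjE)
    assume "kd x = 0" "kd y = 1" "ix x \<noteq> ix y" then show ?thesis using b by (simp add: rk_def)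
  next
    assume "kd x = 0" "kd y = 2" "ix x \<le> ix y" then show ?thesis using b by (simp add: rk_def)
  next
    assume "kd x = 2" "kd y = 1" "ix x < ix y" then show ?thesis using b by (simp add: rk_def)
  next
    assume "kd x = 2" "kd y = 2" "ix x < ix y" then show ?thesis using b by (simp add: rk_def)
  qed
qed

definition g1 where "g1 n x = (px n x, py n x)"
definition g2 where "g2 n x = (py n x, px n x)"
definition ff where "ff n i x = (rk n i x, x)"

lemma inj_g1: "Q \<subseteq> XX n \<Longrightarrow> inj_on (g1 n) Q"
  unfolding inj_on_def g1_def using pt_inj by blast
lemma inj_g2: "Q \<subseteq> XX n \<Longrightarrow> inj_on (g2 n) Q"
  unfolding inj_on_def g2_def using pt_inj by blast
lemma inj_ff: "inj_on (ff n i) Q"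
  unfolding inj_on_def ff_def by auto

lemma R_g1: "RR n \<subseteq> lin_of (g1 n) (XX n)"
  unfolding RR_def lin_of_def g1_def using pt_key by fastforce
lemma R_g2: "RR n \<subseteq> lin_of (g2 n) (XX n)"
  unfolding RR_def lin_of_def g2_def using pt_key by fastforce
lemma R_ff: "RR n \<subseteq> lin_of (ff n i) (XX n)"
  unfolding RR_def lin_of_def ff_def using rk_mono by fastforce

lemma x_decomp: "x = 3 * ix x + kd x"
  unfolding kd_def ix_def by simp

definition II :: "nat \<Rightarrow> nat set \<Rightarrow> nat set" where
  "II n Q = {i. i < n \<and> 3*i \<in> Q \<and> 3*i+1 \<in> Q}"

definition LsQ :: "nat \<Rightarrow> nat set \<Rightarrow> nat rel set" where
  "LsQ n Q = insert (lin_of (g1 n) Q) (insert (lin_of (g2 n) Q) ((\<lambda>i. lin_of (ff n i) Q) ` II n Q))"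

lemma finite_II: "finite (II n Q)"
  unfolding II_def by auto

lemma finite_LsQ: "finite (LsQ n Q)"
  unfolding LsQ_def using finite_II by auto

lemma card_LsQ: "card (LsQ n Q) \<le> card (II n Q) + 2"
proof -
  have "card ((\<lambda>i. lin_of (ff n i) Q) ` II n Q) \<le> card (II n Q)" by (rule card_image_le[OF finite_II])
  moreover have "finite ((\<lambda>i. lin_of (ff n i) Q) ` II n Q)" using finite_II by auto
  ultimately show ?thesis unfolding LsQ_def
    by (metis (no_types, lifting) add_2_eq_Suc' card_insert_if finite_insert le_SucI nat_add_left_cancel_le
        plus_1_eq_Suc)
qed

lemma realizer_Q:
  assumes Q: "Q \<subseteq> XX n"
  shows "realizer Q (sub_order Q (RR n)) (LsQ n Q)"
proof -
  have ext: "\<forall>L\<in>LsQ n Q. linear_extension Q (sub_order Q (RR n)) L"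
    unfolding LsQ_def using lin_of_ext[OF inj_g1[OF Q] Q R_g1] lin_of_ext[OF inj_g2[OF Q] Q R_g2]
      lin_of_ext[OF inj_ff Q R_ff] by auto
  have sub1: "sub_order Q (RR n) \<subseteq> \<Inter> (LsQ n Q)"
    using ext unfolding linear_extension_def by auto
  have sub2: "\<Inter> (LsQ n Q) \<subseteq> sub_order Q (RR n)"
  proof
    fix p assume p: "p \<in> \<Inter> (LsQ n Q)"
    obtain x y where xy: "p = (x,y)" by (cases p)
    have "(x,y) \<in> lin_of (g1 n) Q" "(x,y) \<in> lin_of (g2 n) Q" using p xy unfolding LsQ_def by auto
    then have xyQ: "x \<in> Q" "y \<in> Q" and le: "px n x \<le> px n y" "py n x \<le> py n y"
      unfolding lin_of_def g1_def g2_def by auto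
    have xyX: "x \<in> XX n" "y \<in> XX n" using xyQ Q by auto
    have "x = y \<or> lt x y \<or> (kd x = 0 \<and> kd y = 1 \<and> ix x = ix y)"
      using pt_key[OF xyX] le by simp
    moreover have "\<not> (kd x = 0 \<and> kd y = 1 \<and> ix x = ix y)"
    proof
      assume c: "kd x = 0 \<and> kd y = 1 \<and> ix x = ix y"
      define i where "i = ix x"
      have xi: "x = 3*i" using x_decomp[of x] c i_def by simp
      have yi: "y = 3*i+1" using x_decomp[of y] c i_def by simp
      have "i < n" using ix_bound xyX(1) unfolding i_def XX_def by auto
      then have "i \<in> II n Q" unfolding II_def using xi yi xyQ by auto
      then have "(x,y) \<in> lin_of (ff n i) Q" using p xy unfolding LsQ_def by auto
      then show False unfolding lin_of_def ff_def rk_def using xi yi by simp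
    qed
    ultimately show "p \<in> sub_order Q (RR n)"
      unfolding sub_order_def RR_def using xy xyQ xyX by auto
  qed
  show ?thesis unfolding realizer_def using ext sub1 sub2 unfolding LsQ_def by auto
qed

lemma dim_le: "finite Ls \<Longrightarrow> realizer X R Ls \<Longrightarrow> dim X R \<le> card Ls"
  unfolding dim_def by (rule Least_le) auto

lemma height_ge: "finite Q \<Longrightarrow> is_chain Q S C \<Longrightarrow> card C \<le> height Q S"
proof -
  assume f: "finite Q" and c: "is_chain Q S C"
  have "{card C |C. is_chain Q S C} \<subseteq> {..card Q}"
    using f by (auto simp: is_chain_def intro: card_mono)
  then have "finite {card C |C. is_chain Q S C}" using finite_subset by blast
  then show ?thesis unfolding height_def using c by (auto intro: Max_ge)
qed

lemma sub_order_full: "sub_order (XX n) (RR n) = RR n"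
  unfolding sub_order_def RR_def by auto

lemma lower_bound:
  assumes f: "finite Ls" and r: "realizer (XX n) (RR n) Ls"
  shows "n \<le> card Ls"
proof -
  have ex: "\<exists>L\<in>Ls. (3*i, 3*i+1) \<notin> L" if "i < n" for i
  proof -
    have "(3*i, 3*i+1) \<notin> RR n" unfolding RR_def lt_def by auto
    then show ?thesis using r unfolding realizer_def by auto
  qed
  then obtain g where g: "\<And>i. i < n \<Longrightarrow> g i \<in> Ls \<and> (3*i, 3*i+1) \<notin> g i" by metis
  have rev: "(3*i+1, 3*i) \<in> g i" if "i < n" for i
  proof -
    have "linear_extension (XX n) (RR n) (g i)" using g[OF that] r unfolding realizer_def by auto
    then have "total_on (XX n) (g i)" unfolding linear_extension_def linear_order_on_def by auto
    moreover have "3*i \<in> XX n" "3*i+1 \<in> XX n" using that unfolding XX_def by auto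
    ultimately show ?thesis using g[OF that] unfolding total_on_def by force
  qed
  have inj: "inj_on g {..<n}"
  proof (rule inj_onI, rule ccontr)
    fix i j assume ij: "i \<in> {..<n}" "j \<in> {..<n}" "g i = g j" "i \<noteq> j"
    let ?L = "g i"
    have le: "linear_extension (XX n) (RR n) ?L" using g ij r unfolding realizer_def by auto
    then have tr: "trans ?L" and RL: "RR n \<subseteq> ?L"
      unfolding linear_extension_def linear_order_on_def partial_order_on_def preorder_on_def by auto
    have "(3*i, 3*j+1) \<in> RR n" "(3*j, 3*i+1) \<in> RR n"
      using ij unfolding RR_def XX_def lt_def by auto
    then have 1: "(3*i, 3*j+1) \<in> ?L" "(3*j, 3*i+1) \<in> ?L" using RL by auto
    have 2: "(3*j+1, 3*j) \<in> ?L" using rev[of j] ij by auto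
    have "(3*i, 3*i+1) \<in> ?L" using tr 1 2 unfolding trans_def by meson
    then show False using g[of i] ij by auto
  qed
  have "g ` {..<n} \<subseteq> Ls" using g by auto
  then have "card {..<n} \<le> card Ls" using card_inj_on_le[OF inj _ f] by auto
  then show ?thesis by simp
qed

lemma dim_X: "n \<le> dim (XX n) (RR n)"
proof -
  have "realizer (XX n) (RR n) (LsQ n (XX n))" using realizer_Q[of "XX n" n] sub_order_full by simp
  then have ex: "\<exists>d. \<exists>Ls. finite Ls \<and> card Ls = d \<and> realizer (XX n) (RR n) Ls"
    using finite_LsQ by blast
  have "\<exists>Ls. finite Ls \<and> card Ls = dim (XX n) (RR n) \<and> realizer (XX n) (RR n) Ls"
    unfolding dim_def by (rule LeastI_ex[OF ex])
  then show ?thesis using lower_bound by metis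
qed

lemma antichain_dim:
  assumes Q: "Q \<subseteq> XX n" and ac: "\<forall>x\<in>Q. \<forall>y\<in>Q. (x,y) \<in> RR n \<longrightarrow> x = y"
  shows "dim Q (sub_order Q (RR n)) \<le> card {lin_of (\<lambda>x::nat. x) Q, lin_of (\<lambda>x. - int x) Q}"
proof (rule dim_le)
  have so: "sub_order Q (RR n) = {(x,x) | x. x \<in> Q}"
    using ac Q unfolding sub_order_def RR_def by auto
  have e1: "linear_extension Q (sub_order Q (RR n)) (lin_of (\<lambda>x::nat. x) Q)"
    unfolding linear_extension_def using lin_of_linear[of "\<lambda>x::nat. x" Q] so
    by (auto simp: lin_of_def)
  have e2: "linear_extension Q (sub_order Q (RR n)) (lin_of (\<lambda>x::nat. - int x) Q)"
    unfolding linear_extension_def using lin_of_linear[of "\<lambda>x::nat. - int x" Q] so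
    by (auto simp: lin_of_def inj_on_def)
  show "realizer Q (sub_order Q (RR n)) {lin_of (\<lambda>x::nat. x) Q, lin_of (\<lambda>x. - int x) Q}"
    unfolding realizer_def using e1 e2 so by (auto simp: lin_of_def)
qed simp

lemma desc_cmp:
  fixes ku kv iu iv i j :: nat
  assumes "(ku = 0 \<and> iu = i) \<or> (ku = 1 \<and> iu = j) \<or> (ku = 2 \<and> i \<le> iu \<and> iu < j)"
   "(kv = 0 \<and> iv = i) \<or> (kv = 1 \<and> iv = j) \<or> (kv = 2 \<and> i \<le> iv \<and> iv < j)" "i < j"
  shows "(ku = kv \<and> iu = iv) \<or> ((ku = 0 \<and> kv = 1 \<and> iu \<noteq> iv) \<or> (ku = 0 \<and> kv = 2 \<and> iu \<le> iv)
     \<or> (ku = 2 \<and> kv = 1 \<and> iu < iv) \<or> (ku = 2 \<and> kv = 2 \<and> iu < iv)) \<or>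
     ((kv = 0 \<and> ku = 1 \<and> iv \<noteq> iu) \<or> (kv = 0 \<and> ku = 2 \<and> iv \<le> iu)
     \<or> (kv = 2 \<and> ku = 1 \<and> iv < iu) \<or> (kv = 2 \<and> ku = 2 \<and> iv < iu))"
  using assms by (elim disjE conjE; simp; linarith)

lemma chain_bound:
  assumes conv: "convex_sub (XX n) (RR n) Q" and i: "i \<in> II n Q" and j: "j \<in> II n Q" and ij: "i < j"
  shows "j - i + 2 \<le> height Q (sub_order Q (RR n))"
proof -
  have Q: "Q \<subseteq> XX n" using conv unfolding convex_sub_def by auto
  have fQ: "finite Q" using Q finite_subset unfolding XX_def by blast
  have iQ: "3*i \<in> Q" "i < n" using i unfolding II_def by auto
  have jQ: "3*j+1 \<in> Q" "j < n" using j unfolding II_def by auto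
  define C where "C = insert (3*i) (insert (3*j+1) ((\<lambda>k. 3*k+2) ` {i..<j}))"
  have cQ: "3*k+2 \<in> Q" if "i \<le> k" "k < j" for k
  proof -
    have X: "3*k+2 \<in> XX n" "3*i \<in> XX n" "3*j+1 \<in> XX n" using that jQ iQ unfolding XX_def by auto
    have "strictly_below (RR n) (3*i) (3*k+2)" "strictly_below (RR n) (3*k+2) (3*j+1)"
      using X that unfolding strictly_below_def RR_def lt_def by auto
    then show ?thesis using conv iQ jQ X unfolding convex_sub_def by blast
  qed
  have CQ: "C \<subseteq> Q" unfolding C_def using iQ jQ cQ by auto
  have chain: "is_chain Q (sub_order Q (RR n)) C"
    unfolding is_chain_def
  proof (intro conjI CQ ballI)
    fix u v assume uv: "u \<in> C" "v \<in> C"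
    have uX: "u \<in> XX n" "v \<in> XX n" using uv CQ Q by auto
    have desc: "(kd w = 0 \<and> ix w = i) \<or> (kd w = 1 \<and> ix w = j) \<or> (kd w = 2 \<and> i \<le> ix w \<and> ix w < j)"
      if "w \<in> C" for w using that unfolding C_def by auto
    have cmp: "(kd u = kd v \<and> ix u = ix v) \<or> lt u v \<or> lt v u"
      using desc_cmp[OF desc[OF uv(1)] desc[OF uv(2)] ij] unfolding lt_def .
    have "u = v \<or> lt u v \<or> lt v u" using cmp eq_iff[of u v] by blast
    then show "(u, v) \<in> sub_order Q (RR n) \<or> (v, u) \<in> sub_order Q (RR n)"
      using uv CQ uX unfolding sub_order_def RR_def by auto
  qed
  have "card ((\<lambda>k. 3*k+2) ` {i..<j}) = j - i"
    by (subst card_image) (auto simp: inj_on_def)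
  moreover have "3*i \<notin> (\<lambda>k. 3*k+2) ` {i..<j}" "3*j+1 \<notin> (\<lambda>k. 3*k+2) ` {i..<j}"
    by (auto, presburger+)
  moreover have "3*i \<noteq> 3*j+1" by presburger
  ultimately have "card C = j - i + 2" unfolding C_def by simp
  then show ?thesis using height_ge[OF fQ chain] by simp
qed

theorem proposition9:
  fixes n :: nat
  assumes "n \<ge> 2"
  shows "\<exists>(X :: nat set) R. finite X \<and> poset X R \<and> excludes_3_3 X R \<and> dim X R \<ge> n \<and>
           (\<forall>Q. convex_sub X R Q \<longrightarrow>
                 dim Q (sub_order Q R) \<le> height Q (sub_order Q R) + 1)"
proof (intro exI[of _ "XX n"] exI[of _ "RR n"] conjI allI impI)
  show "finite (XX n)" unfolding XX_def by simp
  show "poset (XX n) (RR n)" by (rule poset_RR)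
  show "excludes_3_3 (XX n) (RR n)" by (rule excl)
  show "n \<le> dim (XX n) (RR n)" by (rule dim_X)
  fix Q assume conv: "convex_sub (XX n) (RR n) Q"
  have Q: "Q \<subseteq> XX n" using conv unfolding convex_sub_def by auto
  have fQ: "finite Q" using Q finite_subset unfolding XX_def by blast
  let ?S = "sub_order Q (RR n)"
  show "dim Q ?S \<le> height Q ?S + 1"
  proof (cases "\<forall>x\<in>Q. \<forall>y\<in>Q. (x,y) \<in> RR n \<longrightarrow> x = y")
    case True
    have d: "dim Q ?S \<le> card {lin_of (\<lambda>x::nat. x) Q, lin_of (\<lambda>x. - int x) Q}"
      by (rule antichain_dim[OF Q True])
    show ?thesis
    proof (cases "Q = {}")
      case True
      then show ?thesis using d by (simp add: lin_of_def)
    next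
      case False
      then obtain x where x: "x \<in> Q" by auto
      have "is_chain Q ?S {x}" using x unfolding is_chain_def sub_order_def RR_def using Q by auto
      then have "1 \<le> height Q ?S" using height_ge[OF fQ] by fastforce
      moreover have "card {lin_of (\<lambda>x::nat. x) Q, lin_of (\<lambda>x. - int x) Q} \<le> 2"
        by (simp add: card_insert_le_m1)
      ultimately show ?thesis using d by linarith
    qed
  next
    case False
    then obtain x y where xy: "x \<in> Q" "y \<in> Q" "(x,y) \<in> RR n" "x \<noteq> y" by auto
    have "is_chain Q ?S {x,y}" using xy Q unfolding is_chain_def sub_order_def RR_def by auto
    then have h2: "2 \<le> height Q ?S" using height_ge[OF fQ] xy(4) by fastforce
    have d: "dim Q ?S \<le> card (II n Q) + 2"
      using dim_le[OF finite_LsQ realizer_Q[OF Q]] card_LsQ[of n Q] by linarith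
    show ?thesis
    proof (cases "card (II n Q) \<le> 1")
      case True then show ?thesis using d h2 by linarith
    next
      case False
      define i where "i = Min (II n Q)"
      define j where "j = Max (II n Q)"
      have ne: "II n Q \<noteq> {}" using False by auto
      have iI: "i \<in> II n Q" and jI: "j \<in> II n Q" unfolding i_def j_def using finite_II ne by auto
      have sub: "II n Q \<subseteq> {i..j}" unfolding i_def j_def using finite_II by auto
      then have "card (II n Q) \<le> card {i..j}" by (rule card_mono[rotated]) simp
      then have c: "card (II n Q) \<le> j + 1 - i" by simp
      have "i < j"
      proof (rule ccontr)
        assume "\<not> i < j"
        then have "{i..j} \<subseteq> {i}" by auto
        then have "card (II n Q) \<le> 1" using sub card_mono[of "{i}" "II n Q"] by auto
        then show False using False by simp
      qed
      then have "j - i + 2 \<le> height Q ?S" using chain_bound[OF conv iI jI] by simp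
      then show ?thesis using d c \<open>i < j\<close> by linarith
    qed
  qed
qed

end
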